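(* Let $G$ be a connected nontrivial graph with $m$ vertices and let $n\geq3$. If $\min\{3n\lambda(G),\ 2(m+2e(G))\}\geq 6\delta(G)+2$, then $G\boxtimes C_n$ is maximally restricted edge-connected, i.e. $\lambda'(G\boxtimes C_n)=\xi(G\boxtimes C_n)$.
   Context: All graphs are finite, simple and undirected; "nontrivial" means having at least two vertices. $C_n$ denotes the cycle on $n$ vertices. For a graph $G$: $e(G)=|E(G)|$; $\delta(G)$ is the minimum degree; $\lambda(G)$ is the edge-connectivity; for an edge $uv$, its edge-degree is $d_G(u)+d_G(v)-2$, and $\xi(G)$ is the minimum edge-degree over all edges. A restricted edge-cut of a connected graph $G$ is a set $S\subseteq E(G)$ such that $G-S$ is disconnected and every component of $G-S$ has at least $2$ vertices; $\lambda'(G)$ is the minimum cardinality of a restricted edge-cut. A graph $G$ is maximally restricted edge-connected if $\lambda'(G)=\xi(G)$. The strong product $G\boxtimes H$ has vertex set $V(G)\times V(H)$, with $(x_1,y_1)$ and $(x_2,y_2)$ adjacent iff either $x_1=x_2$ and $y_1y_2\in E(H)$, or $y_1=y_2$ and $x_1x_2\in E(G)$, or $x_1x_2\in E(G)$ and $y_1y_2\in E(H)$. (One has $\xi(G\boxtimes C_n)=6\delta(G)+2$.) *)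

theory Defs
  imports Main
begin

type_synonym 'a ugraph = "'a set \<times> 'a set set"

definition verts :: "'a ugraph \<Rightarrow> 'a set" where "verts G = fst G"
definition edges :: "'a ugraph \<Rightarrow> 'a set set" where "edges G = snd G"

definition graph :: "'a ugraph \<Rightarrow> bool" where
  "graph G \<longleftrightarrow> finite (verts G) \<and>
     (\<forall>e\<in>edges G. \<exists>u v. e = {u, v} \<and> u \<noteq> v \<and> u \<in> verts G \<and> v \<in> verts G)"

definition adj :: "'a ugraph \<Rightarrow> ('a \<times> 'a) set" where
  "adj G = {(u, v). {u, v} \<in> edges G}"

definition connected :: "'a ugraph \<Rightarrow> bool" where
  "connected G \<longleftrightarrow> verts G \<noteq> {} \<and>
     (\<forall>u\<in>verts G. \<forall>v\<in>verts G. (u, v) \<in> (adj G)\<^sup>*)"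

definition degree :: "'a ugraph \<Rightarrow> 'a \<Rightarrow> nat" where
  "degree G v = card {e \<in> edges G. v \<in> e}"

definition min_degree :: "'a ugraph \<Rightarrow> nat" where
  "min_degree G = Min (degree G ` verts G)"

definition edge_conn :: "'a ugraph \<Rightarrow> nat" where
  "edge_conn G = Inf {card S | S. S \<subseteq> edges G \<and> \<not> connected (verts G, edges G - S)}"

text \<open>Restricted edge-cut: G - S disconnected and every component of G - S
  has at least 2 vertices.\<close>
definition restricted_edge_cut :: "'a ugraph \<Rightarrow> 'a set set \<Rightarrow> bool" where
  "restricted_edge_cut G S \<longleftrightarrow> S \<subseteq> edges G \<and> \<not> connected (verts G, edges G - S) \<and>
     (\<forall>v\<in>verts G. \<exists>u\<in>verts G. u \<noteq> v \<and> (v, u) \<in> (adj (verts G, edges G - S))\<^sup>*)"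

text \<open>lambda'(G); Inf of the empty nat set is 0 (only relevant if no restricted cut exists).\<close>
definition restricted_edge_conn :: "'a ugraph \<Rightarrow> nat" where
  "restricted_edge_conn G = Inf {card S | S. restricted_edge_cut G S}"

definition min_edge_degree :: "'a ugraph \<Rightarrow> nat" where
  "min_edge_degree G = Min {degree G u + degree G v - 2 | u v. {u, v} \<in> edges G \<and> u \<noteq> v}"

definition max_restricted_edge_connected :: "'a ugraph \<Rightarrow> bool" where
  "max_restricted_edge_connected G \<longleftrightarrow> restricted_edge_conn G = min_edge_degree G"

definition cycle :: "nat \<Rightarrow> nat ugraph" where
  "cycle n = ({0..<n}, {{i, Suc i mod n} | i. i < n})"

definition strong_product :: "'a ugraph \<Rightarrow> 'b ugraph \<Rightarrow> ('a \<times> 'b) ugraph" where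
  "strong_product G H = (verts G \<times> verts H,
     {{(x1, y1), (x2, y2)} | x1 y1 x2 y2.
        x1 \<in> verts G \<and> x2 \<in> verts G \<and> y1 \<in> verts H \<and> y2 \<in> verts H \<and>
        ((x1 = x2 \<and> {y1, y2} \<in> edges H) \<or>
         (y1 = y2 \<and> {x1, x2} \<in> edges G) \<or>
         ({x1, x2} \<in> edges G \<and> {y1, y2} \<in> edges H))})"

end

theory Submission
  imports Defs
begin



definition nx :: "nat \<Rightarrow> nat \<Rightarrow> nat" where "nx n i = (if Suc i < n then Suc i else 0)"
definition pv :: "nat \<Rightarrow> nat \<Rightarrow> nat" where "pv n i = (if i = 0 then n - 1 else i - 1)"

lemma nx_alt: "i < n \<Longrightarrow> nx n i = Suc i mod n"
  unfolding nx_def by (cases "Suc i = n") auto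
lemma nx_lt: "0 < n \<Longrightarrow> nx n i < n" by (simp add: nx_def)
lemma pv_lt: "0 < n \<Longrightarrow> i < n \<Longrightarrow> pv n i < n" unfolding pv_def by auto
lemma nx_neq: "3 \<le> n \<Longrightarrow> i < n \<Longrightarrow> nx n i \<noteq> i"
  unfolding nx_def by auto
lemma nx_pv: "0 < n \<Longrightarrow> i < n \<Longrightarrow> nx n (pv n i) = i"
  unfolding nx_def pv_def by auto
lemma pv_nx: "0 < n \<Longrightarrow> i < n \<Longrightarrow> pv n (nx n i) = i"
  unfolding nx_def pv_def by auto
lemma nx_nx_neq: "3 \<le> n \<Longrightarrow> i < n \<Longrightarrow> nx n (nx n i) \<noteq> i"
  unfolding nx_def by auto
lemma nx_inj: "0 < n \<Longrightarrow> i < n \<Longrightarrow> j < n \<Longrightarrow> nx n i = nx n j \<Longrightarrow> i = j"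
  unfolding nx_def by (auto split: if_splits)
lemma pv_neq_nx: "3 \<le> n \<Longrightarrow> i < n \<Longrightarrow> pv n i \<noteq> nx n i"
  unfolding nx_def pv_def by auto
lemma pv_neq: "3 \<le> n \<Longrightarrow> i < n \<Longrightarrow> pv n i \<noteq> i"
  unfolding pv_def by auto





lemma cyc_edge: "3 \<le> n \<Longrightarrow> {i,j} \<in> edges (cycle n) \<longleftrightarrow> i<n \<and> j<n \<and> (j = nx n i \<or> i = nx n j)"
proof
  assume n: "3 \<le> n" and "{i,j} \<in> edges (cycle n)"
  then obtain k where k: "k < n" "{i,j} = {k, Suc k mod n}" by (auto simp: cycle_def edges_def)
  hence "{i,j} = {k, nx n k}" by (simp add: nx_alt)
  with k n show "i<n \<and> j<n \<and> (j = nx n i \<or> i = nx n j)"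
    by (auto simp: doubleton_eq_iff nx_lt)
next
  assume n: "3 \<le> n" and h: "i<n \<and> j<n \<and> (j = nx n i \<or> i = nx n j)"
  show "{i,j} \<in> edges (cycle n)"
  proof (cases "j = nx n i")
    case True
    hence "{i,j} = {i, Suc i mod n}" using h by (simp add: nx_alt)
    thus ?thesis using h by (auto simp: cycle_def edges_def)
  next
    case False
    hence "i = nx n j" using h by auto
    hence "{i,j} = {j, Suc j mod n}" using h by (auto simp add: nx_alt)
    thus ?thesis using h by (auto simp: cycle_def edges_def)
  qed
qed

locale ps =
  fixes G :: "'a ugraph" and n :: nat
  assumes gr: "graph G" and conn: "connected G" and card2: "card (verts G) \<ge> 2" and n3: "n \<ge> 3"
begin

abbreviation "V \<equiv> verts G"
abbreviation "E \<equiv> edges G"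
definition "H = strong_product G (cycle n)"
definition "nbr x = {y. {x,y} \<in> E}"
definition "hadj p q \<longleftrightarrow> p \<noteq> q \<and> fst p \<in> V \<and> fst q \<in> V \<and> snd p < n \<and> snd q < n \<and>
   (fst p = fst q \<or> {fst p, fst q} \<in> E) \<and> (snd p = snd q \<or> snd q = nx n (snd p) \<or> snd p = nx n (snd q))"

lemma n0: "0 < n" using n3 by auto

lemma finV: "finite V" using gr by (simp add: graph_def)

lemma edge_G: "{a,b} \<in> E \<Longrightarrow> a \<noteq> b \<and> a \<in> V \<and> b \<in> V"
  using gr unfolding graph_def by (metis doubleton_eq_iff)

lemma edgeE: "e \<in> E \<Longrightarrow> \<exists>a b. e = {a,b} \<and> a \<noteq> b \<and> a \<in> V \<and> b \<in> V"
  using gr unfolding graph_def by blast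

lemma hadj_sym: "hadj p q \<Longrightarrow> hadj q p"
  unfolding hadj_def by (auto simp: insert_commute)

lemma verts_H: "verts H = V \<times> {0..<n}"
  by (simp add: H_def strong_product_def verts_def cycle_def)

lemma H_edge: "{p,q} \<in> edges H \<longleftrightarrow> hadj p q"
proof
  assume "{p,q} \<in> edges H"
  hence "\<exists>x1 y1 x2 y2. {p,q} = {(x1,y1),(x2,y2)} \<and>
        x1 \<in> V \<and> x2 \<in> V \<and> y1 \<in> verts (cycle n) \<and> y2 \<in> verts (cycle n) \<and>
    ((x1 = x2 \<and> {y1, y2} \<in> edges (cycle n)) \<or> (y1 = y2 \<and> {x1, x2} \<in> E) \<or>
         ({x1, x2} \<in> E \<and> {y1, y2} \<in> edges (cycle n)))"
    unfolding H_def strong_product_def edges_def by simp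
  then obtain x1 y1 x2 y2 where e: "{p,q} = {(x1,y1),(x2,y2)}" and
    c: "x1 \<in> V" "x2 \<in> V" "y1 \<in> verts (cycle n)" "y2 \<in> verts (cycle n)"
    "(x1 = x2 \<and> {y1, y2} \<in> edges (cycle n)) \<or> (y1 = y2 \<and> {x1, x2} \<in> E) \<or>
         ({x1, x2} \<in> E \<and> {y1, y2} \<in> edges (cycle n))" by blast
  have y: "y1 < n" "y2 < n" using c by (auto simp: cycle_def verts_def)
  have h: "hadj (x1,y1) (x2,y2)"
    using c(5)
  proof (elim disjE conjE)
    assume "x1 = x2" "{y1, y2} \<in> edges (cycle n)"
    moreover have "y1 \<noteq> y2" using \<open>{y1, y2} \<in> edges (cycle n)\<close> y unfolding cyc_edge[OF n3]
      by (metis nx_neq[OF n3])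
    ultimately show ?thesis using y c unfolding hadj_def cyc_edge[OF n3] by auto
  next
    assume "y1 = y2" "{x1, x2} \<in> E"
    thus ?thesis using y c edge_G unfolding hadj_def by auto
  next
    assume "{x1, x2} \<in> E" "{y1, y2} \<in> edges (cycle n)"
    thus ?thesis using y c edge_G unfolding hadj_def cyc_edge[OF n3] by auto
  qed
  from e have "(p = (x1,y1) \<and> q = (x2,y2)) \<or> (p = (x2,y2) \<and> q = (x1,y1))"
    by (auto simp: doubleton_eq_iff)
  thus "hadj p q" using h hadj_sym by auto
next
  assume h: "hadj p q"
  obtain x1 y1 x2 y2 where pq: "p = (x1,y1)" "q = (x2,y2)" by (cases p, cases q) auto
  have c: "x1 \<in> V" "x2 \<in> V" "y1 < n" "y2 < n" using h pq by (auto simp: hadj_def)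
  have "(x1 = x2 \<and> {y1, y2} \<in> edges (cycle n)) \<or> (y1 = y2 \<and> {x1, x2} \<in> E) \<or>
         ({x1, x2} \<in> E \<and> {y1, y2} \<in> edges (cycle n))"
    using h pq c unfolding hadj_def cyc_edge[OF n3] by auto
  moreover have "y1 \<in> verts (cycle n)" "y2 \<in> verts (cycle n)" using c by (auto simp: verts_def cycle_def)
  ultimately show "{p,q} \<in> edges H" using c pq
    unfolding H_def strong_product_def edges_def by (simp only: snd_conv fst_conv mem_Collect_eq) blast
qed

lemma H_edgeE: "e \<in> edges H \<Longrightarrow> \<exists>p q. e = {p,q} \<and> hadj p q"
proof -
  assume "e \<in> edges H"
  then obtain x1 y1 x2 y2 where "e = {(x1,y1),(x2,y2)}"
    unfolding H_def strong_product_def edges_def by auto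
  thus ?thesis using \<open>e \<in> edges H\<close> H_edge by blast
qed

lemma finE_H: "finite (edges H)"
proof -
  have "edges H \<subseteq> (\<lambda>(p,q). {p,q}) ` (verts H \<times> verts H)"
  proof
    fix e assume "e \<in> edges H"
    then obtain p q where "e = {p,q}" "hadj p q" using H_edgeE by blast
    thus "e \<in> (\<lambda>(p,q). {p,q}) ` (verts H \<times> verts H)"
      unfolding verts_H hadj_def by (cases p, cases q) force
  qed
  moreover have "finite (verts H)" unfolding verts_H using finV by simp
  ultimately show ?thesis by (meson finite_SigmaI finite_imageI finite_subset)
qed

lemma card_nbr: "x \<in> V \<Longrightarrow> card (nbr x) = degree G x"
proof -
  assume x: "x \<in> V"
  have "bij_betw (\<lambda>y. {x,y}) (nbr x) {e \<in> E. x \<in> e}"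
  proof (rule bij_betwI')
    show "\<And>a b. a \<in> nbr x \<Longrightarrow> b \<in> nbr x \<Longrightarrow> ({x, a} = {x, b}) = (a = b)"
      by (auto simp: doubleton_eq_iff)
    show "\<And>a. a \<in> nbr x \<Longrightarrow> {x, a} \<in> {e \<in> E. x \<in> e}" by (auto simp: nbr_def)
    show "\<And>e. e \<in> {e \<in> E. x \<in> e} \<Longrightarrow> \<exists>a\<in>nbr x. e = {x, a}"
    proof -
      fix e assume "e \<in> {e \<in> E. x \<in> e}"
      then obtain a b where "e = {a,b}" "e \<in> E" "x \<in> e" using edgeE by blast
      thus "\<exists>a\<in>nbr x. e = {x, a}" by (auto simp: nbr_def insert_commute)
    qed
  qed
  thus ?thesis by (simp add: degree_def bij_betw_same_card)
qed

lemma nbr_sub: "nbr x \<subseteq> V" by (auto simp: nbr_def dest: edge_G)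
lemma fin_nbr: "finite (nbr x)" using nbr_sub finV finite_subset by blast

lemma min_deg_le: "x \<in> V \<Longrightarrow> min_degree G \<le> degree G x"
  unfolding min_degree_def using finV by simp

lemma min_deg_attained: "\<exists>x\<in>V. degree G x = min_degree G"
proof -
  have "V \<noteq> {}" using card2 by auto
  hence "min_degree G \<in> degree G ` V" unfolding min_degree_def using finV by simp
  thus ?thesis by auto
qed

end




lemma closed_reach:
  assumes "(u,v) \<in> (adj K)\<^sup>*" "u \<in> Z" "\<And>a b. {a,b} \<in> edges K \<Longrightarrow> a \<in> Z \<Longrightarrow> b \<in> Z"
  shows "v \<in> Z"
  using assms(1,2)
proof (induction rule: rtrancl_induct)
  case base thus ?case .
next
  case (step y z)
  thus ?case using assms(3) by (auto simp: adj_def)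
qed

context ps begin

definition "OP Z = {(a,b). a \<in> Z \<and> b \<notin> Z \<and> {a,b} \<in> E}"

lemma fin_OP: "finite (OP Z)"
proof -
  have "OP Z \<subseteq> V \<times> V" by (auto simp: OP_def dest: edge_G)
  thus ?thesis using finV by (meson finite_SigmaI finite_subset)
qed

lemma lam_le:
  assumes "u \<in> Z" "u \<in> V" "w \<in> V" "w \<notin> Z"
  shows "edge_conn G \<le> card (OP Z)"
proof -
  define S where "S = (\<lambda>(a,b). {a,b}) ` OP Z"
  have SE: "S \<subseteq> E" by (auto simp: S_def OP_def)
  have "\<not> connected (V, E - S)"
  proof
    assume c: "connected (V, E - S)"
    hence "\<forall>a\<in>V. \<forall>b\<in>V. (a,b) \<in> (adj (V, E - S))\<^sup>*" unfolding connected_def verts_def by simp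
    hence "(u,w) \<in> (adj (V, E - S))\<^sup>*" using assms by blast
    moreover have "\<And>a b. {a,b} \<in> edges (V, E - S) \<Longrightarrow> a \<in> Z \<Longrightarrow> b \<in> Z"
    proof (rule ccontr)
      fix a b assume "{a,b} \<in> edges (V, E - S)" "a \<in> Z" "b \<notin> Z"
      hence "(a,b) \<in> OP Z" "{a,b} \<notin> S" by (auto simp: OP_def edges_def)
      hence "{a,b} \<in> S" unfolding S_def by (metis (mono_tags, lifting) case_prod_conv image_eqI)
      thus False using \<open>{a,b} \<notin> S\<close> by blast
    qed
    ultimately have "w \<in> Z" using closed_reach[of u w "(V, E - S)" Z] assms(1) by blast
    thus False using assms by auto
  qed
  hence "card S \<in> {card S | S. S \<subseteq> E \<and> \<not> connected (V, E - S)}" using SE by blast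
  hence "edge_conn G \<le> card S" unfolding edge_conn_def by (rule cInf_lower) simp
  also have "card S \<le> card (OP Z)" unfolding S_def by (rule card_image_le[OF fin_OP])
  finally show ?thesis .
qed

lemma hadj_verts: "hadj p q \<Longrightarrow> p \<in> verts H \<and> q \<in> verts H"
  unfolding hadj_def verts_H by (cases p, cases q) auto

definition "cutH X = {{p,q} | p q. p \<in> X \<and> q \<in> verts H - X \<and> hadj p q}"

lemma cutH_sub: "cutH X \<subseteq> edges H" unfolding cutH_def using H_edge by auto
lemma fin_cutH: "finite (cutH X)" using cutH_sub finE_H finite_subset by blast

lemma verts_H_ne: "verts H \<noteq> {}"
proof -
  have "V \<noteq> {}" using card2 by auto
  thus ?thesis unfolding verts_H using n0 by auto
qed

lemma rc_X:
  assumes rc: "restricted_edge_cut H S"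
  shows "\<exists>X \<subseteq> verts H. X \<noteq> {} \<and> verts H - X \<noteq> {} \<and> cutH X \<subseteq> S \<and>
     (\<forall>p\<in>X. \<exists>q\<in>X. hadj p q) \<and> (\<forall>p \<in> verts H - X. \<exists>q \<in> verts H - X. hadj p q)"
proof -
  define R where "R = adj (verts H, edges H - S)"
  have R: "(a,b) \<in> R \<longleftrightarrow> {a,b} \<in> edges H \<and> {a,b} \<notin> S" for a b
    by (simp add: R_def adj_def edges_def)
  have Rsym: "(a,b) \<in> R \<Longrightarrow> (b,a) \<in> R" for a b using R by (simp add: insert_commute)
  from rc have "\<not> connected (verts H, edges H - S)" by (simp add: restricted_edge_cut_def)
  then obtain u v where uv: "u \<in> verts H" "v \<in> verts H" "(u,v) \<notin> R\<^sup>*"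
    using verts_H_ne unfolding connected_def R_def by (auto simp: verts_def)
  define X where "X = {w \<in> verts H. (u,w) \<in> R\<^sup>*}"
  have "X \<subseteq> verts H" by (auto simp: X_def)
  moreover have "u \<in> X" using uv by (auto simp: X_def)
  moreover have "v \<in> verts H - X" using uv by (auto simp: X_def)
  moreover have "cutH X \<subseteq> S"
  proof
    fix e assume "e \<in> cutH X"
    then obtain p q where e: "e = {p,q}" "p \<in> X" "q \<in> verts H - X" "hadj p q" by (auto simp: cutH_def)
    show "e \<in> S"
    proof (rule ccontr)
      assume "e \<notin> S"
      hence "(p,q) \<in> R" using e H_edge R by auto
      hence "(u,q) \<in> R\<^sup>*" using e(2) by (auto simp: X_def)
      thus False using e(3) by (auto simp: X_def)
    qed
  qed
  moreover have "\<forall>p\<in>X. \<exists>q\<in>X. hadj p q"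
  proof
    fix p assume p: "p \<in> X"
    from rc p obtain q where q: "q \<in> verts H" "q \<noteq> p" "(p,q) \<in> R\<^sup>*"
      unfolding restricted_edge_cut_def R_def X_def by (auto simp: verts_def)
    then obtain y where y: "(p,y) \<in> R" by (metis converse_rtranclE)
    hence hy: "hadj p y" using R H_edge by auto
    have "(u,y) \<in> R\<^sup>*" using p y by (auto simp: X_def)
    hence "y \<in> X" using hy hadj_verts by (auto simp: X_def)
    thus "\<exists>q\<in>X. hadj p q" using hy by blast
  qed
  moreover have "\<forall>p \<in> verts H - X. \<exists>q \<in> verts H - X. hadj p q"
  proof
    fix p assume p: "p \<in> verts H - X"
    from rc p obtain q where q: "q \<in> verts H" "q \<noteq> p" "(p,q) \<in> R\<^sup>*"
      unfolding restricted_edge_cut_def R_def by (auto simp: verts_def)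
    then obtain y where y: "(p,y) \<in> R" by (metis converse_rtranclE)
    hence hy: "hadj p y" using R H_edge by auto
    have "y \<notin> X"
    proof
      assume "y \<in> X"
      hence "(u,p) \<in> R\<^sup>*" using Rsym[OF y] by (auto simp: X_def)
      thus False using p by (auto simp: X_def)
    qed
    thus "\<exists>q\<in>verts H - X. hadj p q" using hy hadj_verts by blast
  qed
  ultimately show ?thesis by blast
qed

end



context ps begin

lemma has_nbr: "x \<in> V \<Longrightarrow> \<exists>x'. {x,x'} \<in> E"
proof -
  assume x: "x \<in> V"
  have "\<exists>y\<in>V. y \<noteq> x"
  proof (rule ccontr)
    assume "\<not> (\<exists>y\<in>V. y \<noteq> x)"
    hence "V \<subseteq> {x}" by auto
    hence "card V \<le> card {x}" by (intro card_mono) simp_all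
    hence "card V \<le> 1" by simp
    thus False using card2 by auto
  qed
  then obtain y where y: "y \<in> V" "y \<noteq> x" by blast
  have "(x,y) \<in> (adj G)\<^sup>*" using conn x y unfolding connected_def by blast
  then obtain z where "(x,z) \<in> adj G" using y(2) by (metis converse_rtranclE)
  thus ?thesis by (auto simp: adj_def)
qed

lemma deg_H_le:
  assumes p: "p = (x,j)" "x \<in> V" "j < n"
  shows "degree H p \<le> 3 * degree G x + 2"
proof -
  define T where "T = {pv n j, j, nx n j}"
  define A where "A = (insert x (nbr x) \<times> T) - {p}"
  have sub: "{e \<in> edges H. p \<in> e} \<subseteq> (\<lambda>q. {p,q}) ` A"
  proof
    fix e assume "e \<in> {e \<in> edges H. p \<in> e}"
    then obtain a b where e: "e = {a,b}" "hadj a b" "p \<in> e" using H_edgeE by blast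
    hence "(hadj p b \<and> e = {p,b}) \<or> (hadj p a \<and> e = {p,a})" using hadj_sym[of a b] by (auto simp: insert_commute)
    then obtain q where q: "e = {p,q}" "hadj p q" by blast
    obtain x' j' where q': "q = (x',j')" by (cases q)
    have "x' \<in> insert x (nbr x)" using q(2) p q' unfolding hadj_def nbr_def by auto
    moreover have "j' \<in> T"
    proof -
      have "j' = j \<or> j' = nx n j \<or> j = nx n j'" "j' < n" using q(2) p q' unfolding hadj_def by auto
      thus ?thesis unfolding T_def using pv_nx[OF n0] by auto
    qed
    moreover have "q \<noteq> p" using q(2) unfolding hadj_def by auto
    ultimately show "e \<in> (\<lambda>q. {p,q}) ` A" using q q' unfolding A_def by auto
  qed
  have finA: "finite A" unfolding A_def T_def using fin_nbr by auto
  have c1: "degree H p \<le> card A"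
    unfolding degree_def using card_mono[OF finite_imageI[OF finA] sub] card_image_le[OF finA, of "\<lambda>q. {p,q}"] by linarith
  have pin: "p \<in> insert x (nbr x) \<times> T" using p unfolding T_def by auto
  have c2: "card A = card (insert x (nbr x)) * card T - 1"
    unfolding A_def using pin card_cartesian_product by (metis card_Diff_singleton)
  have c3: "card T \<le> 3" unfolding T_def by (simp add: card_insert_le_m1 card_insert_if)
  have c4: "card (insert x (nbr x)) \<le> degree G x + 1"
    using fin_nbr card_nbr[OF p(2)] by (simp add: card_insert_if)
  have "card (insert x (nbr x)) * card T \<le> (degree G x + 1) * 3" using mult_le_mono[OF c4 c3] .
  moreover have "(degree G x + 1) * 3 = 3 * degree G x + 3" by simp
  ultimately show ?thesis using c1 c2 by linarith
qed


lemma fin_vH: "finite (verts H)" unfolding verts_H using finV by simp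

definition "EDS = {degree H u + degree H v - 2 | u v. {u, v} \<in> edges H \<and> u \<noteq> v}"

lemma fin_EDS: "finite EDS"
proof -
  have "EDS \<subseteq> (\<lambda>(u,v). degree H u + degree H v - 2) ` (verts H \<times> verts H)"
    unfolding EDS_def using H_edge hadj_verts by fastforce
  thus ?thesis using fin_vH by (meson finite_SigmaI finite_imageI finite_subset)
qed

lemma xi_le: "min_edge_degree H \<le> 6 * min_degree G + 2"
proof -
  obtain x where x: "x \<in> V" "degree G x = min_degree G" using min_deg_attained by blast
  have n1: "nx n 0 = 1" using n3 unfolding nx_def by auto
  have h: "hadj (x,0) (x,1)" unfolding hadj_def using x n3 n1 by auto
  hence "{(x,0),(x,1)} \<in> edges H" "(x,0::nat) \<noteq> (x,1)" using H_edge by auto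
  hence "degree H (x,0) + degree H (x,1) - 2 \<in> EDS" unfolding EDS_def by blast
  hence "min_edge_degree H \<le> degree H (x,0) + degree H (x,1) - 2"
    unfolding min_edge_degree_def EDS_def[symmetric] using fin_EDS by simp
  moreover have "degree H (x,0) \<le> 3 * degree G x + 2" using deg_H_le[of "(x,0)" x 0] x n3 by auto
  moreover have "degree H (x,1) \<le> 3 * degree G x + 2" using deg_H_le[of "(x,1)" x 1] x n3 by auto
  ultimately show ?thesis using x by linarith
qed

lemma card_vH: "6 \<le> card (verts H)"
proof -
  have "card (verts H) = card V * n" unfolding verts_H by (simp add: card_cartesian_product)
  moreover have "2 * 3 \<le> card V * n" using card2 n3 by (intro mult_le_mono) auto
  ultimately show ?thesis by simp
qed

lemma Spq:
  assumes h: "hadj p q"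
  defines "S \<equiv> {e \<in> edges H. e \<noteq> {p,q} \<and> (p \<in> e \<or> q \<in> e)}"
  shows "restricted_edge_cut H S" "card S \<le> degree H p + degree H q - 2"
proof -
  define Ep where "Ep = {e \<in> edges H. p \<in> e}"
  define Eq where "Eq = {e \<in> edges H. q \<in> e}"
  have pqE: "{p,q} \<in> edges H" using h H_edge by auto
  have fe: "finite Ep" "finite Eq" unfolding Ep_def Eq_def using finE_H by auto
  have SE: "S = (Ep \<union> Eq) - {{p,q}}" unfolding S_def Ep_def Eq_def by auto
  have "card (Ep \<union> Eq) + card (Ep \<inter> Eq) = card Ep + card Eq" using card_Un_Int[OF fe] by simp
  moreover have "1 \<le> card (Ep \<inter> Eq)"
  proof -
    have "{p,q} \<in> Ep \<inter> Eq" using pqE unfolding Ep_def Eq_def by auto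
    thus ?thesis using fe by (metis card_0_eq finite_Int empty_iff less_one not_less)
  qed
  moreover have "card S = card (Ep \<union> Eq) - 1"
  proof -
    have "{p,q} \<in> Ep \<union> Eq" using pqE unfolding Ep_def Eq_def by auto
    thus ?thesis unfolding SE using fe by (simp add: card_Diff_singleton)
  qed
  moreover have "1 \<le> card (Ep \<union> Eq)"
  proof -
    have "{p,q} \<in> Ep \<union> Eq" using pqE unfolding Ep_def Eq_def by auto
    thus ?thesis using fe by (metis card_0_eq finite_Un empty_iff less_one not_less)
  qed
  ultimately show "card S \<le> degree H p + degree H q - 2"
    unfolding degree_def Ep_def[symmetric] Eq_def[symmetric] by linarith
  define R where "R = adj (verts H, edges H - S)"
  have R: "(a,b) \<in> R \<longleftrightarrow> {a,b} \<in> edges H \<and> {a,b} \<notin> S" for a b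
    by (simp add: R_def adj_def edges_def)
  have pqR: "(p,q) \<in> R" "(q,p) \<in> R" using pqE R unfolding S_def by (auto simp: insert_commute)
  have hv: "p \<in> verts H" "q \<in> verts H" using hadj_verts[OF h] by auto
  have SsubE: "S \<subseteq> edges H" unfolding S_def by auto
  have "\<exists>w \<in> verts H. w \<notin> {p,q}"
  proof (rule ccontr)
    assume "\<not> (\<exists>w \<in> verts H. w \<notin> {p,q})"
    hence "verts H \<subseteq> {p,q}" by auto
    hence "card (verts H) \<le> card {p,q}" by (intro card_mono) auto
    also have "\<dots> \<le> 2" by (simp add: card_insert_if)
    finally show False using card_vH by simp
  qed
  then obtain w where w: "w \<in> verts H" "w \<notin> {p,q}" by blast
  have nc: "\<not> connected (verts H, edges H - S)"
  proof
    assume "connected (verts H, edges H - S)"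
    hence "\<forall>a\<in>verts H. \<forall>b\<in>verts H. (a,b) \<in> R" if False using that by simp
    have "\<forall>a\<in>verts H. \<forall>b\<in>verts H. (a,b) \<in> R\<^sup>*"
      using \<open>connected (verts H, edges H - S)\<close> unfolding connected_def R_def verts_def by simp
    hence "(p,w) \<in> (adj (verts H, edges H - S))\<^sup>*" using hv w unfolding R_def by blast
    moreover have "\<And>a b. {a,b} \<in> edges (verts H, edges H - S) \<Longrightarrow> a \<in> {p,q} \<Longrightarrow> b \<in> {p,q}"
    proof -
      fix a b assume ab: "{a,b} \<in> edges (verts H, edges H - S)" "a \<in> {p,q}"
      hence "{a,b} \<in> edges H" "{a,b} \<notin> S" by (auto simp: edges_def)
      hence "{a,b} = {p,q}" using ab(2) unfolding S_def by auto
      thus "b \<in> {p,q}" by auto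
    qed
    ultimately have "w \<in> {p,q}" using closed_reach[of p w "(verts H, edges H - S)" "{p,q}"] by blast
    thus False using w by blast
  qed
  have all: "\<forall>v\<in>verts H. \<exists>u\<in>verts H. u \<noteq> v \<and> (v, u) \<in> R\<^sup>*"
  proof
    fix v assume v: "v \<in> verts H"
    show "\<exists>u\<in>verts H. u \<noteq> v \<and> (v, u) \<in> R\<^sup>*"
    proof (cases "v \<in> {p,q}")
      case True
      have "p \<noteq> q" using h unfolding hadj_def by auto
      thus ?thesis using True pqR hv by auto
    next
      case False
      obtain x j where xj: "v = (x,j)" by (cases v)
      have xj': "x \<in> V" "j < n" using v xj unfolding verts_H by auto
      obtain x' where x': "{x,x'} \<in> E" using has_nbr[OF xj'(1)] by blast
      have h1: "hadj v (x, nx n j)" unfolding hadj_def using xj xj' nx_neq[OF n3 xj'(2)] nx_lt[OF n0] by auto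
      have h2: "hadj v (x, pv n j)" unfolding hadj_def using xj xj' pv_neq[OF n3 xj'(2)] pv_lt[OF n0] nx_pv[OF n0] by auto
      have h3: "hadj v (x', j)" unfolding hadj_def using xj xj' x' edge_G[OF x'] by auto
      have d: "(x, nx n j) \<noteq> (x, pv n j)" "(x, nx n j) \<noteq> (x', j)" "(x, pv n j) \<noteq> (x', j)"
        using pv_neq_nx[OF n3 xj'(2)] edge_G[OF x'] by auto
      have "\<exists>r. hadj v r \<and> r \<notin> {p,q}"
      proof (rule ccontr)
        assume "\<not> (\<exists>r. hadj v r \<and> r \<notin> {p,q})"
        hence "(x, nx n j) \<in> {p,q}" "(x, pv n j) \<in> {p,q}" "(x', j) \<in> {p,q}" using h1 h2 h3 by auto
        thus False using d by auto
      qed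
      then obtain r where r: "hadj v r" "r \<notin> {p,q}" by blast
      have "{v,r} \<in> edges H" using r H_edge by auto
      moreover have "{v,r} \<notin> S" using False r unfolding S_def by auto
      ultimately have "(v,r) \<in> R" using R by auto
      moreover have "r \<noteq> v" "r \<in> verts H" using r(1) hadj_verts[of v r] unfolding hadj_def by auto
      ultimately show ?thesis by blast
    qed
  qed
  show "restricted_edge_cut H S"
    unfolding restricted_edge_cut_def using SsubE nc all unfolding R_def by (simp add: verts_def)
qed

end



context ps begin

definition "Xl X i = {a \<in> V. (a,i) \<in> X}"
definition "Zt X i t = (if t = (0::nat) then Xl X i else if t = 1 then Xl X i \<inter> Xl X (nx n i) else Xl X i \<union> Xl X (nx n i))"
definition "Phi X = (\<lambda>(i,t,a,b). if t = (0::nat) then {(a,i),(b,i)} else if t = 1 then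
   (if (b, nx n i) \<notin> X then {(a,i),(b,nx n i)} else {(b,i),(a,nx n i)})
   else (if (a, nx n i) \<in> X then {(b,i),(a,nx n i)} else {(a,i),(b,nx n i)}))"
definition "DD X = (SIGMA i:{..<n}. SIGMA t:{..<3::nat}. OP (Zt X i t))"

lemma OP_D: "(a,b) \<in> OP Z \<Longrightarrow> a \<in> Z \<and> b \<notin> Z \<and> {a,b} \<in> E \<and> a \<noteq> b \<and> a \<in> V \<and> b \<in> V"
  unfolding OP_def using edge_G by auto

lemma cutH_I: "p \<in> X \<Longrightarrow> q \<in> verts H \<Longrightarrow> q \<notin> X \<Longrightarrow> hadj p q \<Longrightarrow> {p,q} \<in> cutH X"
  unfolding cutH_def by blast

lemma Phi_mem:
  assumes "x \<in> DD X"
  shows "Phi X x \<in> cutH X"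
proof -
  obtain i t a b where x: "x = (i,t,a,b)" by (cases x) auto
  have i: "i < n" "t < 3" and ab: "(a,b) \<in> OP (Zt X i t)" using assms x unfolding DD_def by auto
  define j where "j = nx n i"
  have j: "j < n" "j = nx n i" using nx_lt[OF n0] j_def by auto
  have ab': "{a,b} \<in> E" "a \<noteq> b" "a \<in> V" "b \<in> V" using OP_D[OF ab] by auto
  have vb: "(b,i) \<in> verts H" "(b,j) \<in> verts H" "(a,i) \<in> verts H" "(a,j) \<in> verts H"
    using ab' i j unfolding verts_H by auto
  have h1: "hadj (a,i) (b,j)" "hadj (a,j) (b,i)" "hadj (a,i) (b,i)"
    unfolding hadj_def using ab' i j by auto
  have t: "t = 0 \<or> t = 1 \<or> t = 2" using i by auto
  moreover
  { assume t0: "t = 0"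
    hence "(a,i) \<in> X" "(b,i) \<notin> X" using OP_D[OF ab] unfolding Zt_def Xl_def by auto
    hence ?thesis using t0 x vb h1 unfolding Phi_def by (auto intro!: cutH_I) }
  moreover
  { assume t1: "t = 1"
    hence m: "(a,i) \<in> X" "(a,j) \<in> X" "(b,i) \<notin> X \<or> (b,j) \<notin> X"
      using OP_D[OF ab] ab' unfolding Zt_def Xl_def j_def by auto
    have ?thesis
    proof (cases "(b,j) \<in> X")
      case True
      hence "Phi X x = {(a,j),(b,i)}" using t1 x unfolding Phi_def j_def by (auto simp: insert_commute)
      thus ?thesis using m True vb h1 by (auto intro!: cutH_I)
    next
      case False
      hence "Phi X x = {(a,i),(b,j)}" using t1 x unfolding Phi_def j_def by auto
      thus ?thesis using m False vb h1 by (auto intro!: cutH_I)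
    qed }
  moreover
  { assume t2: "t = 2"
    hence m: "(a,i) \<in> X \<or> (a,j) \<in> X" "(b,i) \<notin> X" "(b,j) \<notin> X"
      using OP_D[OF ab] ab' unfolding Zt_def Xl_def j_def by auto
    have ?thesis
    proof (cases "(a,j) \<in> X")
      case True
      hence "Phi X x = {(a,j),(b,i)}" using t2 x unfolding Phi_def j_def by (auto simp: insert_commute)
      thus ?thesis using m True vb h1 by (auto intro!: cutH_I)
    next
      case False
      hence "Phi X x = {(a,i),(b,j)}" using t2 x unfolding Phi_def j_def by auto
      thus ?thesis using m False vb h1 by (auto intro!: cutH_I)
    qed }
  ultimately show ?thesis by blast
qed


lemma dbl_same: "i \<noteq> j \<Longrightarrow> {(a,i),(b,j)} = {(a',i),(b',j)} \<Longrightarrow> a = a' \<and> b = b'"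
  by (auto simp: doubleton_eq_iff)

lemma nx_pair: "i < n \<Longrightarrow> i' < n \<Longrightarrow> {i, nx n i} = {i', nx n i'} \<Longrightarrow> i = i'"
  using nx_nx_neq[OF n3, of i] by (auto simp: doubleton_eq_iff)

lemma Phi_snd:
  assumes "x \<in> DD X" "x = (i,t,a,b)"
  shows "snd ` Phi X x = (if t = 0 then {i} else {i, nx n i})"
  using assms unfolding Phi_def by (auto simp: image_iff)

lemma Phi_inj: "inj_on (Phi X) (DD X)"
proof (rule inj_onI)
  fix x y assume x: "x \<in> DD X" and y: "y \<in> DD X" and e: "Phi X x = Phi X y"
  obtain i t a b where xx: "x = (i,t,a,b)" by (cases x) auto
  obtain i' t' a' b' where yy: "y = (i',t',a',b')" by (cases y) auto
  have i: "i < n" "t < 3" and ab: "(a,b) \<in> OP (Zt X i t)" using x xx unfolding DD_def by auto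
  have i': "i' < n" "t' < 3" and ab2: "(a',b') \<in> OP (Zt X i' t')" using y yy unfolding DD_def by auto
  have ni: "nx n i \<noteq> i" "nx n i' \<noteq> i'" using nx_neq[OF n3] i i' by auto
  have s1: "snd ` Phi X x = snd ` Phi X y" using e by simp
  have tt: "(t = 0) = (t' = 0)"
  proof (rule ccontr)
    assume "(t = 0) \<noteq> (t' = 0)"
    thus False using s1 Phi_snd[OF x xx] Phi_snd[OF y yy] ni by (auto simp: doubleton_eq_iff split: if_splits)
  qed
  have ii: "i = i'"
  proof (cases "t = 0")
    case True thus ?thesis using s1 Phi_snd[OF x xx] Phi_snd[OF y yy] tt by auto
  next
    case False thus ?thesis using s1 Phi_snd[OF x xx] Phi_snd[OF y yy] tt nx_pair[OF i(1) i'(1)] by auto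
  qed
  define j where "j = nx n i"
  have ij: "i \<noteq> j" using ni j_def by auto
  have o1: "a \<in> Zt X i t" "b \<notin> Zt X i t" "a \<in> V" "b \<in> V" using OP_D[OF ab] by auto
  have o2: "a' \<in> Zt X i t'" "b' \<notin> Zt X i t'" "a' \<in> V" "b' \<in> V" using OP_D[OF ab2] ii by auto
  show "x = y"
  proof (cases "t = 0")
    case True
    hence t0: "t = 0" "t' = 0" using tt by auto
    hence "{(a,i),(b,i)} = {(a',i),(b',i)}" using e xx yy ii unfolding Phi_def by simp
    moreover have "a \<in> Xl X i" "b \<notin> Xl X i" "a' \<in> Xl X i" "b' \<notin> Xl X i" using o1 o2 t0 unfolding Zt_def by auto
    ultimately have "a = a' \<and> b = b'" by (auto simp: doubleton_eq_iff)
    thus ?thesis using xx yy ii t0 by simp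
  next
    case False
    hence t12: "t = 1 \<or> t = 2" "t' = 1 \<or> t' = 2" using tt i i' by auto
    have P: "\<exists>c d. Phi X x = {(c,i),(d,j)} \<and> ((c,d) = (a,b) \<or> (c,d) = (b,a))"
      using t12(1) xx unfolding Phi_def j_def by auto
    have P2: "\<exists>c d. Phi X y = {(c,i),(d,j)} \<and> ((c,d) = (a',b') \<or> (c,d) = (b',a'))"
      using t12(2) yy ii unfolding Phi_def j_def by auto
    define f where "f = (\<lambda>t a b. if t = (1::nat) then (if b \<notin> Xl X j then (a,b) else (b,a))
       else (if a \<in> Xl X j then (b,a) else (a,b)))"
    have m1: "(b,j) \<in> X \<longleftrightarrow> b \<in> Xl X j" "(a,j) \<in> X \<longleftrightarrow> a \<in> Xl X j"
      "(b',j) \<in> X \<longleftrightarrow> b' \<in> Xl X j" "(a',j) \<in> X \<longleftrightarrow> a' \<in> Xl X j"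
      using o1 o2 unfolding Xl_def by auto
    have px: "Phi X x = {(fst (f t a b), i), (snd (f t a b), j)}"
      using xx t12(1) m1 unfolding Phi_def f_def j_def by (auto simp: insert_commute)
    have py: "Phi X y = {(fst (f t' a' b'), i), (snd (f t' a' b'), j)}"
      using yy ii t12(2) m1 unfolding Phi_def f_def j_def by (auto simp: insert_commute)
    have "fst (f t a b) = fst (f t' a' b') \<and> snd (f t a b) = snd (f t' a' b')"
      using e px py dbl_same[OF ij] by metis
    hence fe: "f t a b = f t' a' b'" by (simp add: prod_eq_iff)
    have z: "a \<in> (if t = 1 then Xl X i \<inter> Xl X j else Xl X i \<union> Xl X j)"
       "b \<notin> (if t = 1 then Xl X i \<inter> Xl X j else Xl X i \<union> Xl X j)"
       "a' \<in> (if t' = 1 then Xl X i \<inter> Xl X j else Xl X i \<union> Xl X j)"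
       "b' \<notin> (if t' = 1 then Xl X i \<inter> Xl X j else Xl X i \<union> Xl X j)"
      using o1 o2 t12 unfolding Zt_def j_def by auto
    have "t = t' \<and> a = a' \<and> b = b'"
      using t12 fe z unfolding f_def by (auto split: if_splits)
    thus ?thesis using xx yy ii by simp
  qed
qed


lemma claimA:
  assumes u: "u \<in> V" "\<forall>i<n. (u,i) \<in> X" and w: "w \<in> V" "\<forall>i<n. (w,i) \<notin> X"
  shows "3 * n * edge_conn G \<le> card (cutH X)"
proof -
  have zt: "edge_conn G \<le> card (OP (Zt X i t))" if "i < n" for i t
  proof (rule lam_le[of u _ w])
    have "nx n i < n" using nx_lt[OF n0] .
    thus "u \<in> Zt X i t" "w \<notin> Zt X i t" using u w that unfolding Zt_def Xl_def by auto
  qed (use u w in auto)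
  have "card (DD X) = (\<Sum>i<n. card (SIGMA t:{..<3::nat}. OP (Zt X i t)))"
    unfolding DD_def by (rule card_SigmaI) (auto intro: fin_OP)
  also have "\<dots> = (\<Sum>i<n. \<Sum>t<3::nat. card (OP (Zt X i t)))"
    by (rule sum.cong[OF refl], rule card_SigmaI) (auto intro: fin_OP)
  finally have cD: "card (DD X) = (\<Sum>i<n. \<Sum>t<3::nat. card (OP (Zt X i t)))" .
  have "(\<Sum>i<n. \<Sum>t<3::nat. edge_conn G) \<le> (\<Sum>i<n. \<Sum>t<3::nat. card (OP (Zt X i t)))"
    by (intro sum_mono) (use zt in auto)
  hence "3 * n * edge_conn G \<le> card (DD X)" using cD by simp
  also have "card (DD X) = card (Phi X ` DD X)" using Phi_inj by (simp add: card_image)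
  also have "\<dots> \<le> card (cutH X)" using Phi_mem fin_cutH by (intro card_mono) auto
  finally show ?thesis .
qed

end




lemma card3_filter: "a \<noteq> b \<Longrightarrow> a \<noteq> c \<Longrightarrow> b \<noteq> c \<Longrightarrow>
  card {j \<in> {a,b,c}. Q j} = of_bool (Q a) + of_bool (Q b) + of_bool (Q c)"
proof -
  assume d: "a \<noteq> b" "a \<noteq> c" "b \<noteq> c"
  have "{j \<in> {a,b,c}. Q j} = (if Q a then {a} else {}) \<union> (if Q b then {b} else {}) \<union> (if Q c then {c} else {})"
    by auto
  thus ?thesis using d by (cases "Q a"; cases "Q b"; cases "Q c") (simp_all add: card_insert_if)
qed

lemma sum_two: "finite S \<Longrightarrow> a \<in> S \<Longrightarrow> b \<in> S \<Longrightarrow> a \<noteq> b \<Longrightarrow> 1 \<le> f a \<Longrightarrow> 1 \<le> (f b::nat) \<Longrightarrow> 2 \<le> sum f S"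
proof -
  assume "finite S" "a \<in> S" "b \<in> S" "a \<noteq> b" "1 \<le> f a" "1 \<le> f b"
  hence "sum f {a,b} \<le> sum f S" by (intro sum_mono2) auto
  moreover have "sum f {a,b} = f a + f b" using \<open>a \<noteq> b\<close> by simp
  ultimately show ?thesis using \<open>1 \<le> f a\<close> \<open>1 \<le> f b\<close> by linarith
qed

context ps begin

lemma BD:
  assumes "a < n" "b < n" "R a" "\<not> R b"
  shows "\<exists>k<n. R k \<and> \<not> R (nx n k)"
proof (rule ccontr)
  assume "\<not> (\<exists>k<n. R k \<and> \<not> R (nx n k))"
  hence cl: "\<And>k. k < n \<Longrightarrow> R k \<Longrightarrow> R (nx n k)" by blast
  have "R ((a + m) mod n)" for m
  proof (induction m)
    case 0 thus ?case using assms by simp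
  next
    case (Suc m)
    have "(a + m) mod n < n" using n0 by simp
    hence "R (nx n ((a + m) mod n))" using cl Suc by blast
    moreover have "nx n ((a + m) mod n) = (a + Suc m) mod n"
      using \<open>(a + m) mod n < n\<close> by (simp add: nx_alt mod_Suc_eq)
    ultimately show ?case by simp
  qed
  from this[of "b + n - a"] have "R ((b + n) mod n)" using assms by simp
  thus False using assms by simp
qed

lemma BD2:
  assumes "a < n" "b < n" "R a" "\<not> R b"
  shows "2 \<le> (\<Sum>i<n. of_bool (R i \<noteq> R (nx n i)) :: nat)"
proof -
  obtain k where k: "k < n" "R k" "\<not> R (nx n k)" using BD[OF assms] by blast
  obtain k' where k': "k' < n" "\<not> R k'" "R (nx n k')" using BD[of b a "\<lambda>i. \<not> R i"] assms by blast
  show ?thesis by (rule sum_two[of _ k k']) (use k k' in auto)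
qed


lemma reidx: "(\<Sum>i<n. of_bool (Pb i \<noteq> Qb (pv n i)) :: nat) = (\<Sum>i<n. of_bool (Pb (nx n i) \<noteq> Qb i))"
  by (rule sum.reindex_bij_witness[of _ "nx n" "pv n"]) (auto simp: nx_pv pv_nx n0 nx_lt pv_lt)

lemma K4:
  assumes p: "p < n" "Pb p" and p': "p' < n" "\<not> Pb p'" and q: "q < n" "Qb q" and q': "q' < n" "\<not> Qb q'"
  shows "4 \<le> (\<Sum>i<n. of_bool (Pb i \<noteq> Qb (pv n i)) + of_bool (Pb i \<noteq> Qb i) + of_bool (Pb i \<noteq> Qb (nx n i)) :: nat)"
proof -
  define D where "D = (\<Sum>i<n. of_bool (Pb i \<noteq> Qb i) :: nat)"
  define BI where "BI = (\<Sum>i<n. of_bool ((Pb i \<and> Qb i) \<noteq> (Pb (nx n i) \<and> Qb (nx n i))) :: nat)"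
  define BU where "BU = (\<Sum>i<n. of_bool ((Pb i \<or> Qb i) \<noteq> (Pb (nx n i) \<or> Qb (nx n i))) :: nat)"
  define S3 where "S3 = (\<Sum>i<n. of_bool (Pb i \<noteq> Qb (nx n i)) :: nat)"
  have tot: "(\<Sum>i<n. of_bool (Pb i \<noteq> Qb (pv n i)) + of_bool (Pb i \<noteq> Qb i) + of_bool (Pb i \<noteq> Qb (nx n i)) :: nat)
     = (\<Sum>i<n. of_bool (Pb (nx n i) \<noteq> Qb i) + of_bool (Pb i \<noteq> Qb (nx n i))) + D"
    unfolding D_def using reidx[of Pb Qb] by (simp add: sum.distrib)
  have pw: "of_bool ((Pb i \<and> Qb i) \<noteq> (Pb (nx n i) \<and> Qb (nx n i))) + of_bool ((Pb i \<or> Qb i) \<noteq> (Pb (nx n i) \<or> Qb (nx n i)))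
     \<le> (of_bool (Pb (nx n i) \<noteq> Qb i) + of_bool (Pb i \<noteq> Qb (nx n i)) :: nat)" for i
    by (cases "Pb i"; cases "Qb i"; cases "Pb (nx n i)"; cases "Qb (nx n i)") auto
  have "BI + BU \<le> (\<Sum>i<n. of_bool (Pb (nx n i) \<noteq> Qb i) + of_bool (Pb i \<noteq> Qb (nx n i)))"
    unfolding BI_def BU_def sum.distrib[symmetric] by (rule sum_mono) (rule pw)
  hence main: "BI + BU + D \<le> (\<Sum>i<n. of_bool (Pb i \<noteq> Qb (pv n i)) + of_bool (Pb i \<noteq> Qb i) + of_bool (Pb i \<noteq> Qb (nx n i)) :: nat)"
    using tot by linarith
  have S3le: "S3 + D \<le> (\<Sum>i<n. of_bool (Pb i \<noteq> Qb (pv n i)) + of_bool (Pb i \<noteq> Qb i) + of_bool (Pb i \<noteq> Qb (nx n i)) :: nat)"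
    unfolding S3_def D_def sum.distrib[symmetric] by (rule sum_mono) simp
  show ?thesis
  proof (cases "\<exists>c<n. Pb c \<and> Qb c")
    case I: True
    then obtain c where c: "c < n" "Pb c" "Qb c" by blast
    show ?thesis
    proof (cases "\<exists>d<n. \<not> Pb d \<and> \<not> Qb d")
      case True
      then obtain d where d: "d < n" "\<not> Pb d" "\<not> Qb d" by blast
      have "2 \<le> BI" unfolding BI_def by (rule BD2[of c d]) (use c d in auto)
      moreover have "2 \<le> BU" unfolding BU_def by (rule BD2[of c d]) (use c d in auto)
      ultimately show ?thesis using main by linarith
    next
      case False
      have "2 \<le> BI" unfolding BI_def by (rule BD2[of c p']) (use c p' in auto)
      moreover have "2 \<le> D" unfolding D_def
        by (rule sum_two[of _ p' q']) (use p' q' False in auto)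
      ultimately show ?thesis using main by linarith
    qed
  next
    case NI: False
    show ?thesis
    proof (cases "\<exists>d<n. \<not> Pb d \<and> \<not> Qb d")
      case True
      then obtain d where d: "d < n" "\<not> Pb d" "\<not> Qb d" by blast
      have "2 \<le> BU" unfolding BU_def by (rule BD2[of p d]) (use p d in auto)
      moreover have "2 \<le> D" unfolding D_def
        by (rule sum_two[of _ p q]) (use p q NI in auto)
      ultimately show ?thesis using main by linarith
    next
      case False
      hence all: "\<And>i. i < n \<Longrightarrow> Pb i \<noteq> Qb i" using NI by blast
      have "D = (\<Sum>i<n. 1)" unfolding D_def by (rule sum.cong) (use all in auto)
      hence Dn: "D = n" by simp
      show ?thesis
      proof (cases "n = 3")
        case n3': True
        have "\<exists>i<n. Pb i = Pb (nx n i)"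
        proof (rule ccontr)
          assume "\<not> (\<exists>i<n. Pb i = Pb (nx n i))"
          hence a: "\<forall>i<n. Pb i \<noteq> Pb (nx n i)" by blast
          have "nx n 0 = 1" "nx n 1 = 2" "nx n 2 = 0" using n3' unfolding nx_def by auto
          hence "Pb 0 \<noteq> Pb 1" "Pb 1 \<noteq> Pb 2" "Pb 2 \<noteq> Pb 0" using a n3' by (metis zero_less_numeral one_less_numeral_iff semiring_norm(77) lessI numeral_2_eq_2 numeral_3_eq_3)+
          thus False by blast
        qed
        then obtain i where i: "i < n" "Pb i = Pb (nx n i)" by blast
        have "Pb i \<noteq> Qb (nx n i)" using all[of "nx n i"] nx_lt[OF n0] i by auto
        hence "of_bool (Pb i \<noteq> Qb (nx n i)) \<le> S3" unfolding S3_def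
          by (intro member_le_sum) (use i in auto)
        hence "1 \<le> S3" using \<open>Pb i \<noteq> Qb (nx n i)\<close> by simp
        thus ?thesis using S3le Dn n3' by linarith
      next
        case False
        hence "4 \<le> D" using Dn n3 by simp
        thus ?thesis using main by linarith
      qed
    qed
  qed
qed


definition "CC X a b = {e \<in> cutH X. \<exists>i j. e = {(a,i),(b,j)}}"

lemma fin_CC: "finite (CC X a b)" using fin_cutH unfolding CC_def by auto

lemma CC_K:
  assumes xz: "{x,z} \<in> E"
  shows "(\<Sum>i<n. of_bool (((x,i)\<in>X) \<noteq> ((z,pv n i)\<in>X)) + of_bool (((x,i)\<in>X) \<noteq> ((z,i)\<in>X))
            + of_bool (((x,i)\<in>X) \<noteq> ((z,nx n i)\<in>X)) :: nat) \<le> card (CC X x z)"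
proof -
  have e: "x \<noteq> z" "x \<in> V" "z \<in> V" using edge_G[OF xz] by auto
  define K where "K = (SIGMA i:{..<n}. {j \<in> {pv n i, i, nx n i}. ((x,i)\<in>X) \<noteq> ((z,j)\<in>X)})"
  have "card K = (\<Sum>i<n. card {j \<in> {pv n i, i, nx n i}. ((x,i)\<in>X) \<noteq> ((z,j)\<in>X)})"
    unfolding K_def by (rule card_SigmaI) auto
  also have "\<dots> = (\<Sum>i<n. of_bool (((x,i)\<in>X) \<noteq> ((z,pv n i)\<in>X)) + of_bool (((x,i)\<in>X) \<noteq> ((z,i)\<in>X))
            + of_bool (((x,i)\<in>X) \<noteq> ((z,nx n i)\<in>X)))"
  proof (rule sum.cong[OF refl])
    fix i assume "i \<in> {..<n}"
    hence i: "i < n" by simp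
    show "card {j \<in> {pv n i, i, nx n i}. ((x,i)\<in>X) \<noteq> ((z,j)\<in>X)} =
      of_bool (((x,i)\<in>X) \<noteq> ((z,pv n i)\<in>X)) + of_bool (((x,i)\<in>X) \<noteq> ((z,i)\<in>X))
            + of_bool (((x,i)\<in>X) \<noteq> ((z,nx n i)\<in>X))"
      by (rule card3_filter) (use pv_neq[OF n3 i] pv_neq_nx[OF n3 i] nx_neq[OF n3 i] in auto)
  qed
  finally have cK: "card K = (\<Sum>i<n. of_bool (((x,i)\<in>X) \<noteq> ((z,pv n i)\<in>X)) + of_bool (((x,i)\<in>X) \<noteq> ((z,i)\<in>X))
            + of_bool (((x,i)\<in>X) \<noteq> ((z,nx n i)\<in>X)))" .
  define psi where "psi = (\<lambda>(i::nat,j::nat). {(x,i),(z,j)})"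
  have inj: "inj_on psi K"
    by (rule inj_onI) (use e in \<open>auto simp: psi_def doubleton_eq_iff\<close>)
  have sub: "psi ` K \<subseteq> CC X x z"
  proof
    fix e assume "e \<in> psi ` K"
    then obtain i j where ij: "e = {(x,i),(z,j)}" "i < n" "j \<in> {pv n i, i, nx n i}" "((x,i)\<in>X) \<noteq> ((z,j)\<in>X)"
      unfolding K_def psi_def by auto
    have jn: "j < n" using ij(2,3) pv_lt[OF n0] nx_lt[OF n0] by auto
    have h: "hadj (x,i) (z,j)" unfolding hadj_def using e xz ij(2,3) jn nx_pv[OF n0 ij(2)] by auto
    have vs: "(x,i) \<in> verts H" "(z,j) \<in> verts H" using hadj_verts[OF h] by auto
    have "e \<in> cutH X"
    proof (cases "(x,i) \<in> X")
      case True thus ?thesis using ij vs h by (auto intro!: cutH_I)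
    next
      case False
      hence "{(z,j),(x,i)} \<in> cutH X" using ij vs hadj_sym[OF h] by (auto intro!: cutH_I)
      thus ?thesis using ij by (simp add: insert_commute)
    qed
    thus "e \<in> CC X x z" unfolding CC_def using ij by auto
  qed
  have "card K = card (psi ` K)" using inj by (simp add: card_image)
  also have "\<dots> \<le> card (CC X x z)" by (rule card_mono[OF fin_CC sub])
  finally show ?thesis using cK by simp
qed

lemma cross4:
  assumes xz: "{x,z} \<in> E" and p: "p < n" "(x,p) \<in> X" and p': "p' < n" "(x,p') \<notin> X"
    and q: "q < n" "(z,q) \<in> X" and q': "q' < n" "(z,q') \<notin> X"
  shows "4 \<le> card (CC X x z)"
  using K4[of p "\<lambda>i. (x,i) \<in> X" p' q "\<lambda>j. (z,j) \<in> X" q'] assms CC_K[OF xz, of X] by linarith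

lemma cross3W:
  assumes xz: "{x,z} \<in> E" and i: "i < n" "(x,i) \<in> X" and w: "\<forall>j<n. (z,j) \<notin> X"
  shows "3 \<le> card (CC X x z)"
proof -
  let ?f = "\<lambda>i. of_bool (((x,i)\<in>X) \<noteq> ((z,pv n i)\<in>X)) + of_bool (((x,i)\<in>X) \<noteq> ((z,i)\<in>X))
            + of_bool (((x,i)\<in>X) \<noteq> ((z,nx n i)\<in>X)) :: nat"
  have "?f i = 3" using i w pv_lt[OF n0 i(1)] nx_lt[OF n0] by simp
  moreover have "?f i \<le> sum ?f {..<n}" by (rule member_le_sum) (use i in auto)
  ultimately show ?thesis using CC_K[OF xz, of X] by linarith
qed

lemma cross6W:
  assumes xz: "{x,z} \<in> E" and i: "i < n" "(x,i) \<in> X" and i': "i' < n" "(x,i') \<in> X" "i \<noteq> i'"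
    and w: "\<forall>j<n. (z,j) \<notin> X"
  shows "6 \<le> card (CC X x z)"
proof -
  let ?f = "\<lambda>i. of_bool (((x,i)\<in>X) \<noteq> ((z,pv n i)\<in>X)) + of_bool (((x,i)\<in>X) \<noteq> ((z,i)\<in>X))
            + of_bool (((x,i)\<in>X) \<noteq> ((z,nx n i)\<in>X)) :: nat"
  have "?f i = 3" using i w pv_lt[OF n0 i(1)] nx_lt[OF n0] by simp
  moreover have "?f i' = 3" using i' w pv_lt[OF n0 i'(1)] nx_lt[OF n0] by simp
  moreover have "sum ?f {i,i'} \<le> sum ?f {..<n}" by (rule sum_mono2) (use i i' in auto)
  ultimately show ?thesis using CC_K[OF xz, of X] i'(3) by simp
qed


lemma CC_disj: "e \<in> CC X a b \<Longrightarrow> e \<in> CC X a' b' \<Longrightarrow> {a,b} = {a',b'}"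
  unfolding CC_def by (auto simp: doubleton_eq_iff)

lemma CC_vert: "e \<in> CC X a b \<Longrightarrow> e = {(x,i),(x,j)} \<Longrightarrow> a = b"
  unfolding CC_def by (auto simp: doubleton_eq_iff)

definition "VE X x = {e \<in> cutH X. \<exists>i j. e = {(x,i),(x,j)}}"

lemma VE_CC: "a \<noteq> b \<Longrightarrow> VE X x \<inter> CC X a b = {}"
  unfolding VE_def using CC_vert by blast

lemma VE_VE: "x \<noteq> y \<Longrightarrow> VE X x \<inter> VE X y = {}"
  unfolding VE_def by (auto simp: doubleton_eq_iff)

lemma fin_VE: "finite (VE X x)" using fin_cutH unfolding VE_def by auto

lemma vert2:
  assumes x: "x \<in> V" and a: "a < n" "(x,a) \<in> X" and b: "b < n" "(x,b) \<notin> X"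
  shows "2 \<le> card (VE X x)"
proof -
  obtain k where k: "k < n" "(x,k) \<in> X" "(x,nx n k) \<notin> X" using BD[of a b "\<lambda>i. (x,i) \<in> X"] a b by blast
  obtain k' where k': "k' < n" "(x,k') \<notin> X" "(x,nx n k') \<in> X" using BD[of b a "\<lambda>i. (x,i) \<notin> X"] a b by blast
  have h1: "hadj (x,k) (x,nx n k)" unfolding hadj_def using x k nx_neq[OF n3 k(1)] nx_lt[OF n0] by auto
  have h2: "hadj (x,nx n k') (x,k')" unfolding hadj_def using x k' nx_neq[OF n3 k'(1)] nx_lt[OF n0] by auto
  have e1: "{(x,k),(x,nx n k)} \<in> VE X x" unfolding VE_def using k h1 hadj_verts[OF h1] by (auto intro!: cutH_I)
  have e2: "{(x,nx n k'),(x,k')} \<in> VE X x" unfolding VE_def using k' h2 hadj_verts[OF h2] by (auto intro!: cutH_I)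
  have ne: "{(x,k),(x,nx n k)} \<noteq> {(x,nx n k'),(x,k')}"
    using k k' nx_nx_neq[OF n3 k(1)] by (auto simp: doubleton_eq_iff)
  have "card {{(x,k),(x,nx n k)}, {(x,nx n k'),(x,k')}} \<le> card (VE X x)"
    by (rule card_mono[OF fin_VE]) (use e1 e2 in auto)
  thus ?thesis using ne by simp
qed

lemma nb3:
  assumes nf: "\<forall>x\<in>V. \<exists>i<n. (x,i) \<notin> X" and x: "x \<in> V" "i < n" "(x,i) \<in> X" "i' < n" "(x,i') \<notin> X"
    and z: "z \<in> nbr x"
  shows "3 \<le> card (CC X x z)"
proof -
  have xz: "{x,z} \<in> E" using z unfolding nbr_def by auto
  hence zV: "z \<in> V" using edge_G by auto
  show ?thesis
  proof (cases "\<exists>j<n. (z,j) \<in> X")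
    case True
    then obtain j where j: "j < n" "(z,j) \<in> X" by blast
    obtain j' where j': "j' < n" "(z,j') \<notin> X" using nf zV by blast
    show ?thesis using cross4[OF xz x(2,3) x(4,5) j j'] by simp
  next
    case False thus ?thesis using cross3W[OF xz x(2,3)] by blast
  qed
qed

lemma card_UN_CC:
  assumes "x \<notin> I" "finite I"
  shows "card (\<Union>z\<in>I. CC X x z) = (\<Sum>z\<in>I. card (CC X x z))"
proof (rule card_UN_disjoint)
  show "\<forall>i\<in>I. \<forall>j\<in>I. i \<noteq> j \<longrightarrow> CC X x i \<inter> CC X x j = {}"
  proof (intro ballI impI)
    fix i j assume "i \<in> I" "j \<in> I" "i \<noteq> j"
    show "CC X x i \<inter> CC X x j = {}"
    proof (rule ccontr)
      assume "CC X x i \<inter> CC X x j \<noteq> {}"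
      then obtain e where "e \<in> CC X x i" "e \<in> CC X x j" by blast
      hence "{x,i} = {x,j}" by (rule CC_disj)
      thus False using \<open>i \<noteq> j\<close> by (auto simp: doubleton_eq_iff)
    qed
  qed
qed (use assms fin_CC in auto)

end



context ps begin

lemma VE_UN: "a \<notin> I \<Longrightarrow> VE X x \<inter> (\<Union>z\<in>I. CC X a z) = {}"
proof -
  assume a: "a \<notin> I"
  { fix z assume "z \<in> I" hence "a \<noteq> z" using a by auto hence "VE X x \<inter> CC X a z = {}" by (rule VE_CC) }
  thus ?thesis by blast
qed

lemma claimU:
  assumes Xs: "X \<subseteq> verts H" and ne: "X \<noteq> {}" and hin: "\<forall>p\<in>X. \<exists>q\<in>X. hadj p q"
    and nf: "\<forall>x\<in>V. \<exists>i<n. (x,i) \<notin> X"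
  shows "6 * min_degree G + 2 \<le> card (cutH X)"
proof (cases "\<exists>x\<in>V. (\<exists>i<n. (x,i) \<in> X) \<and> (\<forall>z\<in>nbr x. \<forall>j<n. (z,j) \<notin> X)")
  case True
  then obtain x i where x: "x \<in> V" "i < n" "(x,i) \<in> X" and iso: "\<forall>z\<in>nbr x. \<forall>j<n. (z,j) \<notin> X" by blast
  obtain q where q: "q \<in> X" "hadj (x,i) q" using hin x by blast
  obtain z j where zj: "q = (z,j)" by (cases q)
  have zx: "z = x"
  proof (rule ccontr)
    assume "z \<noteq> x"
    hence "z \<in> nbr x" "j < n" using q(2) zj unfolding hadj_def nbr_def by auto
    thus False using iso q(1) zj by blast
  qed
  have j: "j < n" "j \<noteq> i" "(x,j) \<in> X" using q zj zx unfolding hadj_def by auto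
  obtain ob where ob: "ob < n" "(x,ob) \<notin> X" using nf x by blast
  have v2: "2 \<le> card (VE X x)" by (rule vert2[OF x(1) x(2,3) ob])
  have c6: "6 \<le> card (CC X x z)" if "z \<in> nbr x" for z
  proof -
    have "{x,z} \<in> E" using that unfolding nbr_def by auto
    thus ?thesis using cross6W[of x z i X j] x j iso that by blast
  qed
  have xn: "x \<notin> nbr x" unfolding nbr_def using edge_G[of x x] by auto
  have "6 * card (nbr x) \<le> (\<Sum>z\<in>nbr x. card (CC X x z))"
    using sum_mono[of "nbr x" "\<lambda>_. 6" "\<lambda>z. card (CC X x z)"] c6 by simp
  also have "\<dots> = card (\<Union>z\<in>nbr x. CC X x z)" using card_UN_CC[OF xn fin_nbr] by simp
  finally have u: "6 * card (nbr x) \<le> card (\<Union>z\<in>nbr x. CC X x z)" .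
  have disj: "VE X x \<inter> (\<Union>z\<in>nbr x. CC X x z) = {}" using VE_UN[OF xn] .
  have "card (VE X x \<union> (\<Union>z\<in>nbr x. CC X x z)) = card (VE X x) + card (\<Union>z\<in>nbr x. CC X x z)"
    by (rule card_Un_disjoint[OF fin_VE _ disj]) (use fin_CC fin_nbr in auto)
  moreover have "card (VE X x \<union> (\<Union>z\<in>nbr x. CC X x z)) \<le> card (cutH X)"
    by (rule card_mono[OF fin_cutH]) (auto simp: VE_def CC_def)
  moreover have "min_degree G \<le> card (nbr x)" using min_deg_le[OF x(1)] card_nbr[OF x(1)] by simp
  ultimately show ?thesis using v2 u by linarith
next
  case False
  hence noiso: "\<And>x. x \<in> V \<Longrightarrow> (\<exists>i<n. (x,i) \<in> X) \<Longrightarrow> \<exists>z\<in>nbr x. \<exists>j<n. (z,j) \<in> X" by blast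
  obtain p where p: "p \<in> X" using ne by blast
  obtain x i where xi: "p = (x,i)" by (cases p)
  have x: "x \<in> V" "i < n" "(x,i) \<in> X" using p xi Xs unfolding verts_H by auto
  obtain y j where y: "y \<in> nbr x" "j < n" "(y,j) \<in> X" using noiso[OF x(1)] x by blast
  have xy: "{x,y} \<in> E" using y unfolding nbr_def by auto
  have yV: "y \<in> V" "x \<noteq> y" using edge_G[OF xy] by auto
  obtain ob where ob: "ob < n" "(x,ob) \<notin> X" using nf x by blast
  obtain ob' where ob': "ob' < n" "(y,ob') \<notin> X" using nf yV by blast
  have vx: "2 \<le> card (VE X x)" by (rule vert2[OF x(1) x(2,3) ob])
  have vy: "2 \<le> card (VE X y)" by (rule vert2[OF yV(1) y(2,3) ob'])
  have c4: "4 \<le> card (CC X x y)" by (rule cross4[OF xy x(2,3) ob y(2,3) ob'])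
  have xn: "x \<notin> nbr x" "y \<notin> nbr y" unfolding nbr_def using edge_G[of x x] edge_G[of y y] by auto
  have xnb: "x \<in> nbr y" using xy unfolding nbr_def by (simp add: insert_commute)
  define Ax where "Ax = (\<Union>z\<in>nbr x. CC X x z)"
  define Ay where "Ay = (\<Union>z\<in>nbr y - {x}. CC X y z)"
  have cAx: "card Ax = (\<Sum>z\<in>nbr x. card (CC X x z))" unfolding Ax_def using card_UN_CC[OF xn(1) fin_nbr] by simp
  have cAy: "card Ay = (\<Sum>z\<in>nbr y - {x}. card (CC X y z))" unfolding Ay_def using card_UN_CC[of y "nbr y - {x}"] xn(2) fin_nbr by simp
  have "(\<Sum>z\<in>nbr x. card (CC X x z)) = card (CC X x y) + (\<Sum>z\<in>nbr x - {y}. card (CC X x z))"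
    using y(1) fin_nbr by (simp add: sum.remove)
  moreover have "3 * card (nbr x - {y}) \<le> (\<Sum>z\<in>nbr x - {y}. card (CC X x z))"
    using sum_mono[of "nbr x - {y}" "\<lambda>_. 3" "\<lambda>z. card (CC X x z)"] nb3[OF nf x(1,2,3) ob] by simp
  moreover have "card (nbr x - {y}) = card (nbr x) - 1" using y(1) fin_nbr by simp
  moreover have "1 \<le> card (nbr x)" using y(1) fin_nbr by (metis card_0_eq empty_iff less_one not_less)
  ultimately have ax: "4 + 3 * (card (nbr x) - 1) \<le> card Ax" using cAx c4 by linarith
  have "3 * card (nbr y - {x}) \<le> (\<Sum>z\<in>nbr y - {x}. card (CC X y z))"
    using sum_mono[of "nbr y - {x}" "\<lambda>_. 3" "\<lambda>z. card (CC X y z)"] nb3[OF nf yV(1) y(2,3) ob'] by simp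
  moreover have "card (nbr y - {x}) = card (nbr y) - 1" using xnb fin_nbr by simp
  moreover have "1 \<le> card (nbr y)" using xnb fin_nbr by (metis card_0_eq empty_iff less_one not_less)
  ultimately have ay: "3 * (card (nbr y) - 1) \<le> card Ay" using cAy by linarith
  have finA: "finite Ax" "finite Ay" unfolding Ax_def Ay_def using fin_CC fin_nbr by auto
  have d1: "VE X x \<inter> VE X y = {}" using VE_VE yV(2) .
  have d2: "(VE X x \<union> VE X y) \<inter> Ax = {}" unfolding Ax_def using VE_UN[OF xn(1), of X x] VE_UN[OF xn(1), of X y] by blast
  have d3: "(VE X x \<union> VE X y \<union> Ax) \<inter> Ay = {}"
  proof -
    have "y \<notin> nbr y - {x}" using xn(2) by blast
    hence "VE X x \<inter> Ay = {}" "VE X y \<inter> Ay = {}" unfolding Ay_def using VE_UN by blast+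
    moreover have "Ax \<inter> Ay = {}"
    proof (rule ccontr)
      assume "Ax \<inter> Ay \<noteq> {}"
      then obtain e z z' where e: "e \<in> CC X x z" "z \<in> nbr x" "e \<in> CC X y z'" "z' \<in> nbr y - {x}"
        unfolding Ax_def Ay_def by blast
      have "{x,z} = {y,z'}" using CC_disj[OF e(1,3)] .
      thus False using e(4) yV(2) by (auto simp: doubleton_eq_iff)
    qed
    ultimately show ?thesis by blast
  qed
  have "card (VE X x \<union> VE X y \<union> Ax \<union> Ay) = card (VE X x) + card (VE X y) + card Ax + card Ay"
    using d1 d2 d3 fin_VE finA by (simp add: card_Un_disjoint)
  moreover have "card (VE X x \<union> VE X y \<union> Ax \<union> Ay) \<le> card (cutH X)"
    by (rule card_mono[OF fin_cutH]) (auto simp: VE_def CC_def Ax_def Ay_def)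
  moreover have "min_degree G \<le> card (nbr x)" using min_deg_le[OF x(1)] card_nbr[OF x(1)] by simp
  moreover have "min_degree G \<le> card (nbr y)" using min_deg_le[OF yV(1)] card_nbr[OF yV(1)] by simp
  ultimately show ?thesis using vx vy ax ay by linarith
qed

lemma cutH_compl: "X \<subseteq> verts H \<Longrightarrow> cutH (verts H - X) = cutH X"
proof
  assume Xs: "X \<subseteq> verts H"
  show "cutH (verts H - X) \<subseteq> cutH X"
  proof
    fix e assume "e \<in> cutH (verts H - X)"
    then obtain p q where e: "e = {p,q}" "p \<in> verts H - X" "q \<in> verts H - (verts H - X)" "hadj p q"
      unfolding cutH_def by blast
    have "{q,p} \<in> cutH X" unfolding cutH_def using e(2,3) hadj_sym[OF e(4)] by blast
    thus "e \<in> cutH X" using e(1) by (simp add: insert_commute)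
  qed
  show "cutH X \<subseteq> cutH (verts H - X)"
  proof
    fix e assume "e \<in> cutH X"
    then obtain p q where e: "e = {p,q}" "p \<in> X" "q \<in> verts H - X" "hadj p q"
      unfolding cutH_def by blast
    have "p \<in> verts H - (verts H - X)" using e(2) Xs by blast
    hence "{q,p} \<in> cutH (verts H - X)" unfolding cutH_def using e(3) hadj_sym[OF e(4)] by blast
    thus "e \<in> cutH (verts H - X)" using e(1) by (simp add: insert_commute)
  qed
qed

lemma LBX:
  assumes A: "6 * min_degree G + 2 \<le> 3 * n * edge_conn G"
    and Xs: "X \<subseteq> verts H" and ne: "X \<noteq> {}" and ne2: "verts H - X \<noteq> {}"
    and hin: "\<forall>p\<in>X. \<exists>q\<in>X. hadj p q" and hout: "\<forall>p \<in> verts H - X. \<exists>q \<in> verts H - X. hadj p q"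
  shows "6 * min_degree G + 2 \<le> card (cutH X)"
proof (cases "\<exists>u\<in>V. \<forall>i<n. (u,i) \<in> X")
  case True
  then obtain u where u: "u \<in> V" "\<forall>i<n. (u,i) \<in> X" by blast
  show ?thesis
  proof (cases "\<exists>w\<in>V. \<forall>i<n. (w,i) \<notin> X")
    case True
    then obtain w where w: "w \<in> V" "\<forall>i<n. (w,i) \<notin> X" by blast
    show ?thesis using claimA[OF u w] A by linarith
  next
    case False
    define Y where "Y = verts H - X"
    have "6 * min_degree G + 2 \<le> card (cutH Y)"
    proof (rule claimU)
      show "Y \<subseteq> verts H" "Y \<noteq> {}" "\<forall>p\<in>Y. \<exists>q\<in>Y. hadj p q" using ne2 hout unfolding Y_def by auto
      show "\<forall>x\<in>V. \<exists>i<n. (x,i) \<notin> Y" using False unfolding Y_def by auto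
    qed
    thus ?thesis unfolding Y_def using cutH_compl[OF Xs] by simp
  qed
next
  case False
  show ?thesis by (rule claimU[OF Xs ne hin]) (use False in auto)
qed

lemma LB:
  assumes A: "6 * min_degree G + 2 \<le> 3 * n * edge_conn G" and rc: "restricted_edge_cut H S"
  shows "6 * min_degree G + 2 \<le> card S"
proof -
  obtain X where X: "X \<subseteq> verts H" "X \<noteq> {}" "verts H - X \<noteq> {}" "cutH X \<subseteq> S"
     "\<forall>p\<in>X. \<exists>q\<in>X. hadj p q" "\<forall>p \<in> verts H - X. \<exists>q \<in> verts H - X. hadj p q"
    using rc_X[OF rc] by blast
  have "finite S" using rc finE_H unfolding restricted_edge_cut_def by (auto intro: finite_subset)
  hence "card (cutH X) \<le> card S" using X(4) by (rule card_mono)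
  thus ?thesis using LBX[OF A X(1,2,3,5,6)] by linarith
qed

lemma main:
  assumes "6 * min_degree G + 2 \<le> 3 * n * edge_conn G"
  shows "restricted_edge_conn H = min_edge_degree H"
proof -
  define RS where "RS = {card S | S. restricted_edge_cut H S}"
  have "min_edge_degree H \<in> EDS"
  proof -
    have "EDS \<noteq> {}"
    proof -
      obtain x where x: "x \<in> V" using card2 by fastforce
      have "hadj (x,0) (x,1)" unfolding hadj_def using x n3 unfolding nx_def by auto
      hence "{(x,0),(x,1)} \<in> edges H" "(x,0::nat) \<noteq> (x,1)" using H_edge by auto
      thus ?thesis unfolding EDS_def by blast
    qed
    thus ?thesis unfolding min_edge_degree_def EDS_def[symmetric] using fin_EDS by simp
  qed
  then obtain u v where uv: "{u,v} \<in> edges H" "u \<noteq> v" "min_edge_degree H = degree H u + degree H v - 2"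
    unfolding EDS_def by auto
  have huv: "hadj u v" using uv H_edge by auto
  have mem: "card {e \<in> edges H. e \<noteq> {u,v} \<and> (u \<in> e \<or> v \<in> e)} \<in> RS" using Spq(1)[OF huv] unfolding RS_def by blast
  have "Inf RS \<le> card {e \<in> edges H. e \<noteq> {u,v} \<and> (u \<in> e \<or> v \<in> e)}" by (rule cInf_lower[OF mem]) simp
  hence le1: "restricted_edge_conn H \<le> min_edge_degree H"
    unfolding restricted_edge_conn_def RS_def[symmetric]
    using Spq(2)[OF huv] uv(3) by linarith
  have "6 * min_degree G + 2 \<le> restricted_edge_conn H"
    unfolding restricted_edge_conn_def RS_def[symmetric]
  proof (rule cInf_greatest)
    show "RS \<noteq> {}" using mem by blast
    show "\<And>x. x \<in> RS \<Longrightarrow> 6 * min_degree G + 2 \<le> x" unfolding RS_def using LB[OF assms] by blast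
  qed
  thus ?thesis using le1 xi_le by linarith
qed

end

theorem corollary3p5:
  fixes G :: "'a ugraph" and n :: nat
  assumes "graph G" and "connected G" and "card (verts G) \<ge> 2" and "n \<ge> 3"
    and "min (3 * n * edge_conn G) (2 * (card (verts G) + 2 * card (edges G)))
           \<ge> 6 * min_degree G + 2"
  shows "max_restricted_edge_connected (strong_product G (cycle n))"
proof -
  interpret ps G n using assms by unfold_locales
  have "6 * min_degree G + 2 \<le> 3 * n * edge_conn G" using assms(5) by simp
  from main[OF this] show ?thesis unfolding max_restricted_edge_connected_def H_def .
qed


end
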